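(* Let $n,s\in\mathbb{N}$, $\varepsilon\in(0,1)$, and suppose $m:=\frac{\varepsilon n}{2s}$ is an integer with $m\ge 3$; put $L:=n/m=\frac{2s}{\varepsilon}$ (an integer). Define $b_0=1$ and $b_k=km-1$ for $k=1,\dots,L$, and $$B=\{1,2\}\cup\{b_k,\,b_k+1 : k=1,\dots,L\}\subseteq[n].$$ Define intervals $I_0=\{2,3,\dots,b_1\}$ and $I_k=\{b_k+1,\dots,b_{k+1}\}$ for $1\le k\le L-1$ (these partition $\{2,\dots,n-1\}$). For $x\in I_k$ ($0\le k\le L-1$) let $P(x)=\{b_k,\,b_k+1,\,x,\,b_{k+1},\,b_{k+1}+1\}$. Let $f:[n]\to\mathbb{R}$ have at most $s$ distinct discrete derivatives, and assume (i) $f$ is $\varepsilon$-far from convex, and (ii) there is a convex $h:B\to\mathbb{R}$ with $|\{y\in B: h(y)\ne f(y)\}|\le \frac{\varepsilon}{32}|B|$. Then $$\bigl|\{x\in\{2,\dots,n-1\} : f|_{P(x)} \text{ is not convex}\}\bigr|\ \ge\ \frac{\varepsilon n}{32}.$$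
   Context: For $f:[n]\to\mathbb{R}$, the discrete derivative at $i\in[n-1]$ is $\Delta_f(i)=f(i+1)-f(i)$; the number of distinct discrete derivatives of $f$ is $|\{\Delta_f(i): i\in[n-1]\}|$. For a finite set $S\subseteq\mathbb{R}$, a function $g:S\to\mathbb{R}$ is convex if $\frac{g(y)-g(x)}{y-x}\le\frac{g(z)-g(y)}{z-y}$ for all $x<y<z$ in $S$. $f$ is $\varepsilon$-far from convex if every convex $g:[n]\to\mathbb{R}$ differs from $f$ on at least $\varepsilon n$ points of $[n]$. *)

theory Defs
  imports Complex_Main
begin

definition convex_on_set :: "nat set \<Rightarrow> (nat \<Rightarrow> real) \<Rightarrow> bool" where
  "convex_on_set S g \<longleftrightarrow>
     (\<forall>x\<in>S. \<forall>y\<in>S. \<forall>z\<in>S. x < y \<and> y < z \<longrightarrow>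
        (g y - g x) / (real y - real x) \<le> (g z - g y) / (real z - real y))"

definition num_derivs :: "nat \<Rightarrow> (nat \<Rightarrow> real) \<Rightarrow> nat" where
  "num_derivs n f = card ((\<lambda>i. f (i + 1) - f i) ` {1..<n})"

definition eps_far_convex :: "nat \<Rightarrow> real \<Rightarrow> (nat \<Rightarrow> real) \<Rightarrow> bool" where
  "eps_far_convex n \<epsilon> f \<longleftrightarrow>
     (\<forall>g. convex_on_set {1..n} g \<longrightarrow> real (card {i\<in>{1..n}. g i \<noteq> f i}) \<ge> \<epsilon> * real n)"

definition bpt :: "nat \<Rightarrow> nat \<Rightarrow> nat" where
  "bpt m k = (if k = 0 then 1 else k * m - 1)"

definition Bset :: "nat \<Rightarrow> nat \<Rightarrow> nat set" where
  "Bset m L = {1, 2} \<union> (\<Union>k\<in>{1..L}. {bpt m k, bpt m k + 1})"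

text \<open>I_0 = {2..b_1}, I_k = {b_k+1..b_(k+1)}; since b_0 + 1 = 2 this is uniform.\<close>
definition Ival :: "nat \<Rightarrow> nat \<Rightarrow> nat set" where
  "Ival m k = {bpt m k + 1 .. bpt m (k + 1)}"

definition Pset :: "nat \<Rightarrow> nat \<Rightarrow> nat \<Rightarrow> nat set" where
  "Pset m k x = {bpt m k, bpt m k + 1, x, bpt m (k + 1), bpt m (k + 1) + 1}"

end

theory Submission
  imports Defs
begin


lemma dmono:
  fixes g :: "nat \<Rightarrow> real"
  assumes mono: "\<And>i. 1 \<le> i \<Longrightarrow> i + 2 \<le> n \<Longrightarrow> g (i+1) - g i \<le> g (i+2) - g (i+1)"
  shows "1 \<le> a \<Longrightarrow> a \<le> b \<Longrightarrow> b + 1 \<le> n \<Longrightarrow> g (a+1) - g a \<le> g (b+1) - g b"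
proof (induction b)
  case 0 then show ?case by simp
next
  case (Suc b)
  show ?case
  proof (cases "a = Suc b")
    case True then show ?thesis by simp
  next
    case False
    then have "g (a+1) - g a \<le> g (b+1) - g b" using Suc by simp
    also have "\<dots> \<le> g (Suc b + 1) - g (Suc b)" using mono[of b] Suc False by (simp add: numeral_2_eq_2)
    finally show ?thesis .
  qed
qed

lemma lowpart:
  fixes g :: "nat \<Rightarrow> real"
  assumes mono: "\<And>i. 1 \<le> i \<Longrightarrow> i + 2 \<le> n \<Longrightarrow> g (i+1) - g i \<le> g (i+2) - g (i+1)"
  shows "1 \<le> x \<Longrightarrow> x \<le> y \<Longrightarrow> y \<le> n \<Longrightarrow> g y - g x \<le> real (y - x) * (g y - g (y - 1))"
proof (induction y)
  case 0 then show ?case by simp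
next
  case (Suc y)
  show ?case
  proof (cases "x = Suc y")
    case True then show ?thesis by simp
  next
    case False
    then have xy: "x \<le> y" using Suc by simp
    show ?thesis
    proof (cases "x = y")
      case True then show ?thesis by simp
    next
      case False
      with xy have xy': "x < y" by simp
    have ih: "g y - g x \<le> real (y - x) * (g y - g (y - 1))" using Suc xy by simp
    have dm: "g y - g (y - 1) \<le> g (Suc y) - g y"
      using mono[of "y - 1"] Suc xy' by (cases y) (auto simp: numeral_2_eq_2)
    have "g (Suc y) - g x = (g y - g x) + (g (Suc y) - g y)" by simp
    also have "\<dots> \<le> real (y - x) * (g (Suc y) - g y) + (g (Suc y) - g y)"
      using ih mult_left_mono[OF dm, of "real (y - x)"] by linarith
    also have "\<dots> = real (Suc y - x) * (g (Suc y) - g (Suc y - 1))"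
      using xy by (simp add: Suc_diff_le algebra_simps)
    finally show ?thesis .
  qed
  qed
qed

lemma highpart:
  fixes g :: "nat \<Rightarrow> real"
  assumes mono: "\<And>i. 1 \<le> i \<Longrightarrow> i + 2 \<le> n \<Longrightarrow> g (i+1) - g i \<le> g (i+2) - g (i+1)"
  shows "1 \<le> y \<Longrightarrow> y \<le> z \<Longrightarrow> z \<le> n \<Longrightarrow> real (z - y) * (g (y+1) - g y) \<le> g z - g y"
proof (induction z)
  case 0 then show ?case by simp
next
  case (Suc z)
  show ?case
  proof (cases "y = Suc z")
    case True then show ?thesis by simp
  next
    case False
    then have yz: "y \<le> z" using Suc by simp
    have ih: "real (z - y) * (g (y+1) - g y) \<le> g z - g y" using Suc yz by simp
    have dm: "g (y+1) - g y \<le> g (Suc z) - g z"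
      using dmono[OF mono, where a=y and b=z] Suc yz by simp
    have "real (Suc z - y) * (g (y+1) - g y) = real (z - y) * (g (y+1) - g y) + (g (y+1) - g y)"
      using yz by (simp add: Suc_diff_le algebra_simps)
    also have "\<dots> \<le> (g z - g y) + (g (Suc z) - g z)" using ih dm by linarith
    finally show ?thesis by simp
  qed
qed

lemma convex_of_diffs:
  fixes g :: "nat \<Rightarrow> real"
  assumes mono: "\<And>i. 1 \<le> i \<Longrightarrow> i + 2 \<le> n \<Longrightarrow> g (i+1) - g i \<le> g (i+2) - g (i+1)"
  shows "convex_on_set {1..n} g"
  unfolding convex_on_set_def
proof (intro ballI impI)
  fix x y z assume xs: "x \<in> {1..n}" "y \<in> {1..n}" "z \<in> {1..n}" and o: "x < y \<and> y < z"
  have l: "g y - g x \<le> real (y - x) * (g y - g (y - 1))" using lowpart[OF mono] xs o by simp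
  have r: "real (z - y) * (g (y+1) - g y) \<le> g z - g y" using highpart[OF mono] xs o by simp
  have dm: "g y - g (y - 1) \<le> g (y+1) - g y"
    using mono[of "y - 1"] xs o by (cases y) (auto simp: numeral_2_eq_2)
  have pyx: "real y - real x > 0" "real z - real y > 0" using o by auto
  have "(g y - g x) / (real y - real x) \<le> g y - g (y - 1)"
    using l pyx o by (simp add: divide_le_eq of_nat_diff mult.commute)
  also have "\<dots> \<le> g (y+1) - g y" by (rule dm)
  also have "\<dots> \<le> (g z - g y) / (real z - real y)"
    using r pyx o by (simp add: le_divide_eq of_nat_diff mult.commute)
  finally show "(g y - g x) / (real y - real x) \<le> (g z - g y) / (real z - real y)" .
qed



lemma bpt_Suc: "m \<ge> 3 \<Longrightarrow> bpt m (Suc k) = Suc k * m - 1"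
  by (simp add: bpt_def)

lemma bpt_pos: "m \<ge> 3 \<Longrightarrow> k \<ge> 1 \<Longrightarrow> bpt m k + 1 = k * m"
proof -
  assume "m \<ge> 3" "k \<ge> 1"
  then have "k * m \<ge> 3" by (metis le_trans mult_le_mono nat_mult_1)
  then show ?thesis using \<open>k \<ge> 1\<close> by (simp add: bpt_def)
qed

lemma bpt_ge1: "m \<ge> 3 \<Longrightarrow> bpt m k \<ge> 1"
proof (cases k)
  case 0 then show ?thesis by (simp add: bpt_def)
next
  case (Suc j)
  assume "m \<ge> 3"
  then have "Suc j * m \<ge> 3" by (metis le_add1 le_trans mult_Suc)
  then show ?thesis using Suc by (simp add: bpt_def)
qed

lemma bpt_q_le: "m \<ge> 3 \<Longrightarrow> bpt m k + 1 \<le> bpt m (Suc k)"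
proof (cases k)
  case 0
  assume "m \<ge> 3" then show ?thesis using 0 by (simp add: bpt_def)
next
  case (Suc j)
  assume m: "m \<ge> 3"
  have "bpt m k + 1 = k * m" using bpt_pos[OF m] Suc by simp
  moreover have "bpt m (Suc k) + 1 = Suc k * m" using bpt_pos[OF m] by simp
  ultimately show ?thesis using m by simp
qed

lemma bpt_q_lt: "m \<ge> 3 \<Longrightarrow> k \<ge> 1 \<Longrightarrow> bpt m k + 1 < bpt m (Suc k)"
proof -
  assume m: "m \<ge> 3" and k: "k \<ge> 1"
  have "bpt m k + 1 = k * m" using bpt_pos[OF m k] .
  moreover have "bpt m (Suc k) + 1 = Suc k * m" using bpt_pos[OF m] by simp
  ultimately show ?thesis using m by simp
qed

lemma bpt_less: "m \<ge> 3 \<Longrightarrow> j < j' \<Longrightarrow> bpt m j < bpt m j'"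
proof -
  assume m: "m \<ge> 3"
  have "\<And>k. bpt m k < bpt m (Suc k)"
  proof -
    fix k show "bpt m k < bpt m (Suc k)" using bpt_q_le[OF m, of k] by simp
  qed
  then show "j < j' \<Longrightarrow> bpt m j < bpt m j'" by (rule lift_Suc_mono_less)
qed

lemma bpt_lower: "m \<ge> 3 \<Longrightarrow> k * m \<le> bpt m k + 1"
proof (cases "k = 0")
  case True then show ?thesis by simp
next
  case False
  assume m: "m \<ge> 3"
  show ?thesis using bpt_pos[OF m, of k] False by simp
qed

lemma bpt_upper: "m \<ge> 3 \<Longrightarrow> bpt m (Suc k) + 1 = Suc k * m"
  using bpt_pos by simp

lemma Ival_div: "m \<ge> 3 \<Longrightarrow> bpt m k + 1 \<le> x \<Longrightarrow> x \<le> bpt m (Suc k) \<Longrightarrow> x div m = k"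
proof -
  assume m: "m \<ge> 3" and a: "bpt m k + 1 \<le> x" and b: "x \<le> bpt m (Suc k)"
  have "k * m \<le> x" using bpt_lower[OF m, of k] a by linarith
  moreover have "x < Suc k * m" using bpt_upper[OF m, of k] b by linarith
  ultimately show ?thesis
    by (intro div_nat_eqI) (simp_all add: mult.commute)
qed

lemma div_Ival: "m \<ge> 3 \<Longrightarrow> 2 \<le> x \<Longrightarrow> bpt m (x div m) + 1 \<le> x \<and> x \<le> bpt m (Suc (x div m))"
proof -
  assume m: "m \<ge> 3" and x: "2 \<le> x"
  define k where "k = x div m"
  have lo: "k * m \<le> x" unfolding k_def by (simp add: div_times_less_eq_dividend)
  have hi: "x < Suc k * m" unfolding k_def using m
    by (simp add: dividend_less_times_div mult.commute)
  have "bpt m k + 1 \<le> x"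
  proof (cases "k = 0")
    case True then show ?thesis using x by (simp add: bpt_def)
  next
    case False then show ?thesis using lo bpt_pos[OF m, of k] by simp
  qed
  moreover have "x \<le> bpt m (Suc k)" using hi bpt_upper[OF m, of k] by linarith
  ultimately show ?thesis unfolding k_def by simp
qed

lemma bpt_L: "m \<ge> 3 \<Longrightarrow> L \<ge> 1 \<Longrightarrow> bpt m L = L * m - 1"
  by (simp add: bpt_def)



definition dsl :: "nat \<Rightarrow> (nat \<Rightarrow> real) \<Rightarrow> nat \<Rightarrow> real" where
  "dsl m h k = h (bpt m k + 1) - h (bpt m k)"
definition csl :: "nat \<Rightarrow> (nat \<Rightarrow> real) \<Rightarrow> nat \<Rightarrow> real" where
  "csl m h k = (h (bpt m (Suc k)) - h (bpt m k + 1)) / (real (bpt m (Suc k)) - real (bpt m k + 1))"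
definition Hf :: "nat \<Rightarrow> nat \<Rightarrow> (nat \<Rightarrow> real) \<Rightarrow> nat \<Rightarrow> real" where
  "Hf m n h x = (if x \<le> 1 then h 1 else if n \<le> x then h n else
     h (bpt m (x div m) + 1) + csl m h (x div m) * (real x - real (bpt m (x div m) + 1)))"

locale stp =
  fixes m L n :: nat and h :: "nat \<Rightarrow> real"
  assumes m3: "3 \<le> m" and L1: "1 \<le> L" and nLm: "n = L * m"
    and hconv: "convex_on_set (Bset m L) h"
begin

lemma pL: "bpt m L + 1 = n" using bpt_pos[OF m3 L1] nLm by simp

lemma bmono: "j \<le> j' \<Longrightarrow> bpt m j \<le> bpt m j'"
  using bpt_less[OF m3, of j j'] by (cases "j = j'") auto

lemma inB_p: "k \<le> L \<Longrightarrow> bpt m k \<in> Bset m L"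
  unfolding Bset_def by (cases "k = 0") (auto simp: bpt_def)

lemma inB_q: "k \<le> L \<Longrightarrow> bpt m k + 1 \<in> Bset m L"
  unfolding Bset_def by (cases "k = 0") (auto simp: bpt_def)

lemma tri: "x \<in> Bset m L \<Longrightarrow> y \<in> Bset m L \<Longrightarrow> z \<in> Bset m L \<Longrightarrow> x < y \<Longrightarrow> y < z \<Longrightarrow>
   (h y - h x) / (real y - real x) \<le> (h z - h y) / (real z - real y)"
  using hconv unfolding convex_on_set_def by blast

lemma d_le_c: "k < L \<Longrightarrow> bpt m k + 1 < bpt m (Suc k) \<Longrightarrow> dsl m h k \<le> csl m h k"
  using tri[OF inB_p[of k] inB_q[of k] inB_p[of "Suc k"]] unfolding dsl_def csl_def by simp

lemma c_le_d: "k < L \<Longrightarrow> bpt m k + 1 < bpt m (Suc k) \<Longrightarrow> csl m h k \<le> dsl m h (Suc k)"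
  using tri[OF inB_q[of k] inB_p[of "Suc k"] inB_q[of "Suc k"]] unfolding dsl_def csl_def by simp

lemma d_step: "k < L \<Longrightarrow> dsl m h k \<le> dsl m h (Suc k)"
proof -
  assume k: "k < L"
  show ?thesis
  proof (cases "bpt m k + 1 < bpt m (Suc k)")
    case True then show ?thesis using d_le_c[OF k] c_le_d[OF k] by linarith
  next
    case False
    then have e: "bpt m k + 1 = bpt m (Suc k)" using bpt_q_le[OF m3, of k] by simp
    have m3': "bpt m k + 1 + 1 \<in> Bset m L" using inB_q[of "Suc k"] k e by simp
    have t: "(h (bpt m k + 1) - h (bpt m k)) / (real (bpt m k + 1) - real (bpt m k))
      \<le> (h (bpt m k + 1 + 1) - h (bpt m k + 1)) / (real (bpt m k + 1 + 1) - real (bpt m k + 1))"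
      using tri[OF inB_p[of k] inB_q[of k] m3'] k by simp
    have "dsl m h (Suc k) = h (bpt m k + 1 + 1) - h (bpt m k + 1)" unfolding dsl_def e ..
    then show ?thesis using t unfolding dsl_def by simp
  qed
qed

lemma d_mono: "j \<le> j' \<Longrightarrow> j' \<le> L \<Longrightarrow> dsl m h j \<le> dsl m h j'"
proof (induction j')
  case 0 then show ?case by simp
next
  case (Suc j')
  show ?case
  proof (cases "j = Suc j'")
    case True then show ?thesis by simp
  next
    case False
    then have "dsl m h j \<le> dsl m h j'" using Suc by simp
    also have "\<dots> \<le> dsl m h (Suc j')" using d_step Suc by simp
    finally show ?thesis .
  qed
qed

lemma H_at: "2 \<le> x \<Longrightarrow> x < n \<Longrightarrow>
   Hf m n h x = h (bpt m (x div m) + 1) + csl m h (x div m) * (real x - real (bpt m (x div m) + 1))"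
  unfolding Hf_def by simp

lemma q_lt_n: "k < L \<Longrightarrow> bpt m (Suc k) < n"
  using bmono[of "Suc k" L] pL by simp

lemma H_q: "k < L \<Longrightarrow> Hf m n h (bpt m k + 1) = h (bpt m k + 1)"
proof -
  assume k: "k < L"
  have a: "2 \<le> bpt m k + 1" using bpt_ge1[OF m3, of k] by simp
  have b: "bpt m k + 1 < n" using bpt_q_le[OF m3, of k] q_lt_n[OF k] by simp
  have "(bpt m k + 1) div m = k" using Ival_div[OF m3, of k] bpt_q_le[OF m3, of k] by simp
  then show ?thesis using H_at[OF a b] by simp
qed

lemma H_P: "k < L \<Longrightarrow> Hf m n h (bpt m (Suc k)) = h (bpt m (Suc k))"
proof -
  assume k: "k < L"
  show ?thesis
  proof (cases "bpt m k + 1 = bpt m (Suc k)")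
    case True then show ?thesis using H_q[OF k] by metis
  next
    case False
    then have lt: "bpt m k + 1 < bpt m (Suc k)" using bpt_q_le[OF m3, of k] by simp
    have a: "2 \<le> bpt m (Suc k)" using bpt_ge1[OF m3, of k] lt by simp
    have dv: "bpt m (Suc k) div m = k" using Ival_div[OF m3, of k] lt by simp
    have nz: "real (bpt m (Suc k)) - real (bpt m k + 1) \<noteq> 0" using lt by simp
    show ?thesis using H_at[OF a q_lt_n[OF k]] dv nz unfolding csl_def by simp
  qed
qed

lemma H_1: "Hf m n h 1 = h 1" unfolding Hf_def by simp
lemma n3: "n \<ge> 3" using nLm L1 m3 by (metis le_trans mult_1 mult_le_mono1)
lemma H_n: "Hf m n h n = h n" unfolding Hf_def using n3 by simp

lemma H_B: "y \<in> Bset m L \<Longrightarrow> Hf m n h y = h y"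
proof -
  assume "y \<in> Bset m L"
  then consider "y = 1" | "y = 2" | k where "k \<in> {1..L}" "y = bpt m k" | k where "k \<in> {1..L}" "y = bpt m k + 1"
    unfolding Bset_def by blast
  then show ?thesis
  proof cases
    case 1 then show ?thesis using H_1 by simp
  next
    case 2 then show ?thesis using H_q[of 0] L1 by (simp add: bpt_def numeral_2_eq_2)
  next
    case (3 k)
    then obtain j where "k = Suc j" "j < L" by (cases k) auto
    then show ?thesis using H_P 3 by simp
  next
    case (4 k)
    show ?thesis
    proof (cases "k = L")
      case True then show ?thesis using 4 H_n pL by simp
    next
      case False then show ?thesis using 4 H_q by simp
    qed
  qed
qed

lemma D_p: "j \<le> L \<Longrightarrow> Hf m n h (bpt m j + 1) - Hf m n h (bpt m j) = dsl m h j"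
proof -
  assume j: "j \<le> L"
  have "Hf m n h (bpt m j + 1) = h (bpt m j + 1)" using H_B inB_q j by blast
  moreover have "Hf m n h (bpt m j) = h (bpt m j)" using H_B inB_p j by blast
  ultimately show ?thesis unfolding dsl_def by simp
qed

lemma D_int: "1 \<le> i \<Longrightarrow> i + 1 \<le> n \<Longrightarrow> (\<forall>j\<le>L. i \<noteq> bpt m j) \<Longrightarrow>
  i div m < L \<and> bpt m (i div m) + 1 \<le> i \<and> i + 1 \<le> bpt m (Suc (i div m)) \<and>
  Hf m n h (i + 1) - Hf m n h i = csl m h (i div m)"
proof -
  assume i1: "1 \<le> i" and i2: "i + 1 \<le> n" and np: "\<forall>j\<le>L. i \<noteq> bpt m j"
  define k where "k = i div m"
  have "i \<noteq> 1" using np[rule_format, of 0] by (simp add: bpt_def)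
  then have i2': "2 \<le> i" using i1 by simp
  have "i \<noteq> n - 1" using np[rule_format, of L] pL by simp
  then have i3: "i + 1 < n" using i2 by simp
  have iv: "bpt m k + 1 \<le> i" "i \<le> bpt m (Suc k)" using div_Ival[OF m3 i2'] unfolding k_def by auto
  have kL: "k < L"
  proof (rule ccontr)
    assume "\<not> k < L"
    then have "bpt m L \<le> bpt m k" using bmono by simp
    then show False using iv pL i3 by simp
  qed
  have "i \<noteq> bpt m (Suc k)" using np kL by simp
  then have i4: "i + 1 \<le> bpt m (Suc k)" using iv by simp
  have dv: "(i + 1) div m = k" using Ival_div[OF m3, of k "i+1"] iv i4 by simp
  have "Hf m n h (i + 1) - Hf m n h i = csl m h k"
    using H_at[OF _ i3] H_at[OF i2'] dv i3 i2' unfolding k_def[symmetric]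
    by (simp add: algebra_simps)
  then show ?thesis using kL iv i4 unfolding k_def by simp
qed

lemma H_convex: "convex_on_set {1..n} (Hf m n h)"
proof (rule convex_of_diffs)
  fix i assume i1: "1 \<le> i" and i2: "i + 2 \<le> n"
  define D where "D i = Hf m n h (i + 1) - Hf m n h i" for i
  have "D i \<le> D (i + 1)"
  proof (cases "\<exists>j\<le>L. i = bpt m j")
    case True
    then obtain j where j: "j \<le> L" "i = bpt m j" by blast
    have jL: "j < L"
    proof (rule ccontr)
      assume "\<not> j < L" then have "j = L" using j by simp
      then show False using j i2 pL by simp
    qed
    have Di: "D i = dsl m h j" using D_p j unfolding D_def by simp
    show ?thesis
    proof (cases "\<exists>j'\<le>L. i + 1 = bpt m j'")
      case True
      then obtain j' where j': "j' \<le> L" "i + 1 = bpt m j'" by blast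
      have "j \<le> j'"
      proof (rule ccontr)
        assume "\<not> j \<le> j'" then have "bpt m j' \<le> bpt m j" using bmono by simp
        then show False using j j' by simp
      qed
      then show ?thesis using Di D_p[OF j'(1)] j' d_mono unfolding D_def by simp
    next
      case False
      then have nq: "\<forall>j'\<le>L. i + 1 \<noteq> bpt m j'" by blast
      have r: "(i+1) div m < L \<and> bpt m ((i+1) div m) + 1 \<le> i+1 \<and> i + 1 + 1 \<le> bpt m (Suc ((i+1) div m)) \<and>
        Hf m n h (i + 1 + 1) - Hf m n h (i+1) = csl m h ((i+1) div m)"
        using D_int[of "i+1"] i2 nq by simp
      have dv: "(i+1) div m = j" using Ival_div[OF m3, of j "i+1"] j bpt_q_le[OF m3, of j] by simp
      show ?thesis using r dv d_le_c[OF jL] Di j unfolding D_def by simp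
    qed
  next
    case False
    then have np: "\<forall>j\<le>L. i \<noteq> bpt m j" by blast
    define k where "k = i div m"
    have r: "k < L" "bpt m k + 1 \<le> i" "i + 1 \<le> bpt m (Suc k)" "D i = csl m h k"
      using D_int[OF i1 _ np] i2 unfolding D_def k_def by auto
    show ?thesis
    proof (cases "\<exists>j'\<le>L. i + 1 = bpt m j'")
      case True
      then obtain j' where j': "j' \<le> L" "i + 1 = bpt m j'" by blast
      have "j' = Suc k"
      proof (rule ccontr)
        assume ne: "j' \<noteq> Suc k"
        show False
        proof (cases "j' \<le> k")
          case True then have "bpt m j' \<le> bpt m k" using bmono by simp
          then show False using r j' by simp
        next
          case False then have "Suc k < j'" using ne by simp
          then have "bpt m (Suc k) < bpt m j'" using bpt_less[OF m3] by simp
          then show False using r j' by simp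
        qed
      qed
      then show ?thesis using r c_le_d[of k] D_p[OF j'(1)] j' unfolding D_def by simp
    next
      case False
      then have nq: "\<forall>j'\<le>L. i + 1 \<noteq> bpt m j'" by blast
      have r2: "Hf m n h (i + 1 + 1) - Hf m n h (i+1) = csl m h ((i+1) div m)"
        using D_int[of "i+1"] i2 nq by simp
      have dv: "(i+1) div m = k" using Ival_div[OF m3, of k "i+1"] r by simp
      show ?thesis using r r2 dv unfolding D_def by simp
    qed
  qed
  then show "Hf m n h (i + 1) - Hf m n h i \<le> Hf m n h (i + 2) - Hf m n h (i + 1)"
    unfolding D_def by (simp add: numeral_2_eq_2)
qed

end


context stp begin

lemma chord:
  fixes f :: "nat \<Rightarrow> real"
  assumes k: "k < L"
    and a1: "f (bpt m k) = h (bpt m k)" and a2: "f (bpt m k + 1) = h (bpt m k + 1)"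
    and a3: "f (bpt m (Suc k)) = h (bpt m (Suc k))" and a4: "f (bpt m (Suc k) + 1) = h (bpt m (Suc k) + 1)"
    and eqd: "dsl m h k = dsl m h (Suc k)"
    and x1: "bpt m k + 1 < x" and x2: "x < bpt m (Suc k)"
    and cv: "convex_on_set (Pset m k x) f"
  shows "f x = Hf m n h x"
proof -
  define p where "p = bpt m k"
  define P where "P = bpt m (Suc k)"
  define d where "d = dsl m h k"
  have mem: "p \<in> Pset m k x" "p + 1 \<in> Pset m k x" "x \<in> Pset m k x" "P \<in> Pset m k x" "P + 1 \<in> Pset m k x"
    unfolding Pset_def p_def P_def by auto
  have c: "\<And>a b c. a \<in> Pset m k x \<Longrightarrow> b \<in> Pset m k x \<Longrightarrow> c \<in> Pset m k x \<Longrightarrow> a < b \<Longrightarrow> b < c \<Longrightarrow>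
     (f b - f a) / (real b - real a) \<le> (f c - f b) / (real c - real b)"
    using cv unfolding convex_on_set_def by blast
  have dq: "f (p + 1) - f p = d" using a1 a2 unfolding d_def dsl_def p_def by simp
  have dP: "f (P + 1) - f P = d" using a3 a4 eqd unfolding d_def dsl_def P_def by simp
  have xq: "p + 1 < x" "x < P" using x1 x2 unfolding p_def P_def by auto
  define A where "A = (f x - f (p + 1)) / (real x - real (p + 1))"
  define B where "B = (f P - f x) / (real P - real x)"
  have i1: "d \<le> A" using c[OF mem(1) mem(2) mem(3)] xq dq unfolding A_def by simp
  have i2: "A \<le> B" using c[OF mem(2) mem(3) mem(4)] xq unfolding A_def B_def by simp
  have i3: "B \<le> d" using c[OF mem(3) mem(4) mem(5)] xq dP unfolding B_def by simp
  have pa: "real x - real (p + 1) > 0" "real P - real x > 0" using xq by auto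
  have Ad: "A = d" and Bd: "B = d" using i1 i2 i3 by linarith+
  have e1: "f x - f (p + 1) = d * (real x - real (p + 1))"
    using Ad pa unfolding A_def by (simp add: divide_eq_eq)
  have e2: "f P - f x = d * (real P - real x)"
    using Bd pa unfolding B_def by (simp add: divide_eq_eq)
  have cs: "csl m h k = d"
  proof -
    have "h P - h (p + 1) = d * (real P - real (p + 1))" using e1 e2 a2 a3 unfolding p_def P_def
      by (simp add: algebra_simps)
    moreover have "real P - real (p + 1) \<noteq> 0" using xq by simp
    ultimately show ?thesis unfolding csl_def p_def[symmetric] P_def[symmetric] by simp
  qed
  have dv: "x div m = k" using Ival_div[OF m3, of k x] xq unfolding p_def P_def by simp
  have x2': "2 \<le> x" using xq by simp
  have "x < n" using xq q_lt_n[OF k] unfolding P_def by simp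
  then have "Hf m n h x = h (p + 1) + d * (real x - real (p + 1))"
    using H_at[OF x2'] dv cs unfolding p_def by simp
  then show ?thesis using e1 a2 unfolding p_def by simp
qed

lemma card_Ival: "card (Ival m k) \<le> m"
proof -
  have "card (Ival m k) = bpt m (Suc k) + 1 - (bpt m k + 1)" unfolding Ival_def by simp
  also have "\<dots> \<le> Suc k * m - k * m" using bpt_upper[OF m3, of k] bpt_lower[OF m3, of k] by simp
  also have "\<dots> = m" by simp
  finally show ?thesis .
qed

lemma card_UIval: "card (\<Union>k\<in>K. Ival m k) \<le> m * card K" if "finite K"
proof -
  have "card (\<Union>k\<in>K. Ival m k) \<le> (\<Sum>k\<in>K. card (Ival m k))" by (rule card_UN_le[OF that])
  also have "\<dots> \<le> (\<Sum>k\<in>K. m)" by (rule sum_mono) (rule card_Ival)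
  finally show ?thesis by (simp add: mult.commute)
qed

lemma card_B: "card (Bset m L) \<le> 2 * L + 2"
proof -
  have "card (Bset m L) \<le> card {1::nat, 2} + card (\<Union>k\<in>{1..L}. {bpt m k, bpt m k + 1})"
    unfolding Bset_def by (rule card_Un_le)
  also have "card (\<Union>k\<in>{1..L}. {bpt m k, bpt m k + 1}) \<le> (\<Sum>k\<in>{1..L}. card {bpt m k, bpt m k + 1})"
    by (rule card_UN_le) simp
  also have "\<dots> \<le> (\<Sum>k\<in>{1..L}. 2)" by (rule sum_mono) (simp add: card_insert_le_m1)
  finally show ?thesis by simp
qed

lemma finite_B: "finite (Bset m L)" unfolding Bset_def by simp

lemma KA_bound:
  fixes f :: "nat \<Rightarrow> real"
  defines "Bmis \<equiv> {y\<in>Bset m L. h y \<noteq> f y}"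
  defines "KA \<equiv> {k. k < L \<and> (h (bpt m k) \<noteq> f (bpt m k) \<or> h (bpt m k + 1) \<noteq> f (bpt m k + 1)
      \<or> h (bpt m (Suc k)) \<noteq> f (bpt m (Suc k)) \<or> h (bpt m (Suc k) + 1) \<noteq> f (bpt m (Suc k) + 1))}"
  shows "card KA \<le> 3 * card Bmis"
proof -
  have fin: "finite Bmis" unfolding Bmis_def using finite_B by simp
  have sub: "KA \<subseteq> (\<Union>y\<in>Bmis. {y div m - 1 .. y div m + 1})"
  proof
    fix k assume "k \<in> KA"
    then have kL: "k < L" and ex: "\<exists>y\<in>{bpt m k, bpt m k + 1, bpt m (Suc k), bpt m (Suc k) + 1}. h y \<noteq> f y"
      unfolding KA_def by auto
    then obtain y where y: "y \<in> {bpt m k, bpt m k + 1, bpt m (Suc k), bpt m (Suc k) + 1}" "h y \<noteq> f y" by blast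
    have yB: "y \<in> Bset m L" using y(1) inB_p[of k] inB_q[of k] inB_p[of "Suc k"] inB_q[of "Suc k"] kL by auto
    have lo: "bpt m k \<le> y" using y(1) bmono[of k "Suc k"] by auto
    have hi: "y \<le> Suc k * m" using y(1) bmono[of k "Suc k"] bpt_upper[OF m3, of k] by auto
    have "k * m \<le> y + 1" using lo bpt_lower[OF m3, of k] by simp
    then have "(k - 1) * m \<le> y" using m3 by (simp add: diff_mult_distrib)
    then have "(k - 1) * m div m \<le> y div m" by (rule div_le_mono)
    then have k1: "k - 1 \<le> y div m" using m3 by simp
    have "y div m \<le> Suc k * m div m" using hi by (rule div_le_mono)
    then have k2: "y div m \<le> Suc k" using m3 by simp
    have "k \<in> {y div m - 1 .. y div m + 1}" using k1 k2 by auto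
    then show "k \<in> (\<Union>y\<in>Bmis. {y div m - 1 .. y div m + 1})" using yB y(2) unfolding Bmis_def by blast
  qed
  have "card KA \<le> card (\<Union>y\<in>Bmis. {y div m - 1 .. y div m + 1})"
    using fin sub by (intro card_mono) auto
  also have "\<dots> \<le> (\<Sum>y\<in>Bmis. card {y div m - 1 .. y div m + 1})" by (rule card_UN_le[OF fin])
  also have "\<dots> \<le> (\<Sum>y\<in>Bmis. 3)" by (rule sum_mono) simp
  finally show ?thesis by simp
qed

lemma Kinc_bound:
  fixes f :: "nat \<Rightarrow> real"
  defines "Kinc \<equiv> {k. k < L \<and> h (bpt m k) = f (bpt m k) \<and> h (bpt m k + 1) = f (bpt m k + 1) \<and> dsl m h k < dsl m h (Suc k)}"
  shows "card Kinc \<le> num_derivs n f"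
proof -
  have inj: "inj_on (dsl m h) Kinc"
  proof (rule inj_onI, rule ccontr)
    fix a b assume a: "a \<in> Kinc" and b: "b \<in> Kinc" and e: "dsl m h a = dsl m h b" and ne: "a \<noteq> b"
    have gen: "\<And>a b. a \<in> Kinc \<Longrightarrow> b \<in> Kinc \<Longrightarrow> a < b \<Longrightarrow> dsl m h a < dsl m h b"
    proof -
      fix a b assume a: "a \<in> Kinc" and b: "b \<in> Kinc" and lt: "a < b"
      have "dsl m h a < dsl m h (Suc a)" using a unfolding Kinc_def by simp
      also have "\<dots> \<le> dsl m h b" using d_mono[of "Suc a" b] lt b unfolding Kinc_def by simp
      finally show "dsl m h a < dsl m h b" .
    qed
    show False using gen[OF a b] gen[OF b a] e ne by (cases "a < b") auto
  qed
  have sub: "dsl m h ` Kinc \<subseteq> (\<lambda>i. f (i + 1) - f i) ` {1..<n}"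
  proof
    fix v assume "v \<in> dsl m h ` Kinc"
    then obtain k where k: "k \<in> Kinc" "v = dsl m h k" by blast
    have kL: "k < L" using k unfolding Kinc_def by simp
    have "bpt m k + 1 \<le> bpt m (Suc k)" by (rule bpt_q_le[OF m3])
    then have "bpt m k < n" using q_lt_n[OF kL] by simp
    moreover have "1 \<le> bpt m k" by (rule bpt_ge1[OF m3])
    moreover have "v = f (bpt m k + 1) - f (bpt m k)" using k unfolding Kinc_def dsl_def by simp
    ultimately show "v \<in> (\<lambda>i. f (i + 1) - f i) ` {1..<n}" by auto
  qed
  have "card Kinc = card (dsl m h ` Kinc)" using card_image[OF inj] by simp
  also have "\<dots> \<le> card ((\<lambda>i. f (i + 1) - f i) ` {1..<n})" by (rule card_mono[OF _ sub]) simp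
  finally show ?thesis unfolding num_derivs_def .
qed

end


context stp begin

lemma incl:
  fixes f :: "nat \<Rightarrow> real"
  defines "Bmis \<equiv> {y\<in>Bset m L. h y \<noteq> f y}"
  defines "KA \<equiv> {k. k < L \<and> (h (bpt m k) \<noteq> f (bpt m k) \<or> h (bpt m k + 1) \<noteq> f (bpt m k + 1)
      \<or> h (bpt m (Suc k)) \<noteq> f (bpt m (Suc k)) \<or> h (bpt m (Suc k) + 1) \<noteq> f (bpt m (Suc k) + 1))}"
  defines "Kinc \<equiv> {k. k < L \<and> h (bpt m k) = f (bpt m k) \<and> h (bpt m k + 1) = f (bpt m k + 1) \<and> dsl m h k < dsl m h (Suc k)}"
  defines "BAD \<equiv> {x\<in>{2..n-1}. \<exists>k<L. x \<in> Ival m k \<and> \<not> convex_on_set (Pset m k x) f}"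
  shows "{i\<in>{1..n}. Hf m n h i \<noteq> f i} \<subseteq> Bmis \<union> (\<Union>k\<in>KA. Ival m k) \<union> (\<Union>k\<in>Kinc. Ival m k) \<union> BAD"
proof
  fix i assume "i \<in> {i\<in>{1..n}. Hf m n h i \<noteq> f i}"
  then have i: "1 \<le> i" "i \<le> n" "Hf m n h i \<noteq> f i" by auto
  show "i \<in> Bmis \<union> (\<Union>k\<in>KA. Ival m k) \<union> (\<Union>k\<in>Kinc. Ival m k) \<union> BAD"
  proof (cases "i \<in> Bset m L")
    case True
    then show ?thesis using H_B[OF True] i unfolding Bmis_def by auto
  next
    case notB: False
    have "i \<noteq> 1" using notB unfolding Bset_def by auto
    moreover have "i \<noteq> n" using notB inB_q[of L] pL by auto
    ultimately have i2: "2 \<le> i" "i < n" using i by auto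
    define k where "k = i div m"
    have iv: "bpt m k + 1 \<le> i" "i \<le> bpt m (Suc k)" using div_Ival[OF m3 i2(1)] unfolding k_def by auto
    have kL: "k < L"
    proof (rule ccontr)
      assume "\<not> k < L"
      then have "bpt m L \<le> bpt m k" using bmono by simp
      then show False using iv pL i2 by simp
    qed
    have iI: "i \<in> Ival m k" using iv unfolding Ival_def by simp
    show ?thesis
    proof (cases "k \<in> KA \<or> k \<in> Kinc")
      case True then show ?thesis using iI by blast
    next
      case False
      then have m4: "f (bpt m k) = h (bpt m k)" "f (bpt m k + 1) = h (bpt m k + 1)"
         "f (bpt m (Suc k)) = h (bpt m (Suc k))" "f (bpt m (Suc k) + 1) = h (bpt m (Suc k) + 1)"
        and nl: "\<not> dsl m h k < dsl m h (Suc k)"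
        using kL unfolding KA_def Kinc_def by auto
      have eqd: "dsl m h k = dsl m h (Suc k)" using nl d_step[OF kL] by simp
      show ?thesis
      proof (cases "i \<in> BAD")
        case True then show ?thesis by blast
      next
        case nb: False
        have cv: "convex_on_set (Pset m k i) f" using nb kL iI i2 unfolding BAD_def by auto
        have "i \<noteq> bpt m k + 1" using notB inB_q[of k] kL by auto
        then have s1: "bpt m k + 1 < i" using iv by simp
        have "i \<noteq> bpt m (Suc k)" using notB inB_p[of "Suc k"] kL by auto
        then have s2: "i < bpt m (Suc k)" using iv by simp
        have "f i = Hf m n h i" by (rule chord[OF kL m4 eqd s1 s2 cv])
        then show ?thesis using i by simp
      qed
    qed
  qed
qed

end

theorem mainTheorem6:
  fixes n s m L :: nat and \<epsilon> :: real and f :: "nat \<Rightarrow> real"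
  assumes eps: "0 < \<epsilon>" "\<epsilon> < 1"
    and m_def: "real m = \<epsilon> * real n / (2 * real s)"
    and m3: "m \<ge> 3"
    and L_def: "real L = real n / real m"
    and derivs: "num_derivs n f \<le> s"
    and far: "eps_far_convex n \<epsilon> f"
    and hB: "\<exists>h. convex_on_set (Bset m L) h \<and>
               real (card {y\<in>Bset m L. h y \<noteq> f y}) \<le> \<epsilon> / 32 * real (card (Bset m L))"
  shows "real (card {x\<in>{2..n-1}. \<exists>k<L. x \<in> Ival m k \<and> \<not> convex_on_set (Pset m k x) f})
           \<ge> \<epsilon> * real n / 32"
proof (rule ccontr)
  assume neg: "\<not> ?thesis"
  obtain h where hc: "convex_on_set (Bset m L) h"
    and hcard: "real (card {y\<in>Bset m L. h y \<noteq> f y}) \<le> \<epsilon> / 32 * real (card (Bset m L))"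
    using hB by blast
  have s0: "s \<noteq> 0"
  proof
    assume "s = 0" then have "real m = 0" using m_def by simp
    then show False using m3 by simp
  qed
  have ms: "real m * (2 * real s) = \<epsilon> * real n" using m_def s0 by (simp add: field_simps)
  have mpos: "real m > 0" using m3 by simp
  have Lm: "real L * real m = real n" using L_def mpos by (simp add: field_simps)
  then have nLm: "n = L * m" by (metis of_nat_eq_iff of_nat_mult)
  have npos: "real n > 0"
  proof -
    have "real m * (2 * real s) > 0" using mpos s0 by simp
    then have "\<epsilon> * real n > 0" using ms by simp
    then show ?thesis using eps by (simp add: zero_less_mult_iff)
  qed
  have Lge3: "real L \<ge> 3"
  proof -
    have "real s \<ge> 1" using s0 by simp
    then have "real m * 2 \<le> real m * (2 * real s)" using mpos by simp
    also have "\<dots> < real n" using ms eps npos by simp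
    finally have "real m * 2 < real L * real m" using Lm by simp
    then have "2 < real L" using mpos by simp
    then have "2 < L" by simp
    then have "3 \<le> L" by simp
    then show ?thesis by simp
  qed
  then have L1: "L \<ge> 1" by simp
  interpret stp m L n h using m3 L1 nLm hc by unfold_locales auto
  define Bmis where "Bmis = {y\<in>Bset m L. h y \<noteq> f y}"
  define KA where "KA = {k. k < L \<and> (h (bpt m k) \<noteq> f (bpt m k) \<or> h (bpt m k + 1) \<noteq> f (bpt m k + 1)
      \<or> h (bpt m (Suc k)) \<noteq> f (bpt m (Suc k)) \<or> h (bpt m (Suc k) + 1) \<noteq> f (bpt m (Suc k) + 1))}"
  define Kinc where "Kinc = {k. k < L \<and> h (bpt m k) = f (bpt m k) \<and> h (bpt m k + 1) = f (bpt m k + 1) \<and> dsl m h k < dsl m h (Suc k)}"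
  define BAD where "BAD = {x\<in>{2..n-1}. \<exists>k<L. x \<in> Ival m k \<and> \<not> convex_on_set (Pset m k x) f}"
  have incl': "{i\<in>{1..n}. Hf m n h i \<noteq> f i} \<subseteq> Bmis \<union> (\<Union>k\<in>KA. Ival m k) \<union> (\<Union>k\<in>Kinc. Ival m k) \<union> BAD"
    unfolding Bmis_def KA_def Kinc_def BAD_def by (rule incl)
  have finKA: "finite KA" unfolding KA_def by simp
  have finKi: "finite Kinc" unfolding Kinc_def by simp
  have finBm: "finite Bmis" unfolding Bmis_def using finite_B by simp
  have finBAD: "finite BAD" unfolding BAD_def by simp
  have finI: "\<And>K. finite (\<Union>k\<in>K. Ival m k) \<or> True" by simp
  have cE: "card {i\<in>{1..n}. Hf m n h i \<noteq> f i} \<le> card Bmis + m * card KA + m * card Kinc + card BAD"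
  proof -
    have fU: "finite (Bmis \<union> (\<Union>k\<in>KA. Ival m k) \<union> (\<Union>k\<in>Kinc. Ival m k) \<union> BAD)"
      using finKA finKi finBm finBAD unfolding Ival_def by simp
    have "card {i\<in>{1..n}. Hf m n h i \<noteq> f i} \<le> card (Bmis \<union> (\<Union>k\<in>KA. Ival m k) \<union> (\<Union>k\<in>Kinc. Ival m k) \<union> BAD)"
      by (rule card_mono[OF fU incl'])
    also have "\<dots> \<le> card Bmis + card (\<Union>k\<in>KA. Ival m k) + card (\<Union>k\<in>Kinc. Ival m k) + card BAD"
      by (meson add_mono card_Un_le le_trans order_refl)
    also have "\<dots> \<le> card Bmis + m * card KA + m * card Kinc + card BAD"
      using card_UIval[OF finKA] card_UIval[OF finKi] by simp
    finally show ?thesis .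
  qed
  have far': "\<epsilon> * real n \<le> real (card {i\<in>{1..n}. Hf m n h i \<noteq> f i})"
    using far H_convex unfolding eps_far_convex_def by (metis (no_types, lifting) Collect_cong)
  have cKA: "card KA \<le> 3 * card Bmis" unfolding KA_def Bmis_def by (rule KA_bound)
  have cKi: "card Kinc \<le> s" using Kinc_bound[of f] derivs unfolding Kinc_def by simp
  have cB: "real (card (Bset m L)) \<le> 2 * real L + 2" using card_B by (metis of_nat_le_iff of_nat_add of_nat_mult of_nat_numeral)
  have cBm: "real (card Bmis) \<le> \<epsilon> / 32 * (2 * real L + 2)"
    using hcard cB eps unfolding Bmis_def by (smt (verit) mult_left_mono divide_nonneg_nonneg)
  have bad: "real (card BAD) < \<epsilon> * real n / 32" using neg unfolding BAD_def by simp
  define c where "c = real (card Bmis)"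
  have c0: "c \<ge> 0" unfolding c_def by simp
  have tot: "\<epsilon> * real n \<le> c + real m * (3 * c) + real m * real s + real (card BAD)"
  proof -
    have ni: "card Bmis + m * card KA + m * card Kinc + card BAD \<le> card Bmis + m * (3 * card Bmis) + m * s + card BAD"
      using cKA cKi by (intro add_mono mult_le_mono2 order_refl) auto
    have "real (card Bmis + m * card KA + m * card Kinc + card BAD) \<le> real (card Bmis + m * (3 * card Bmis) + m * s + card BAD)"
      using ni by (simp only: of_nat_le_iff)
    moreover have "real (card {i\<in>{1..n}. Hf m n h i \<noteq> f i}) \<le> real (card Bmis + m * card KA + m * card Kinc + card BAD)"
      using cE by (simp only: of_nat_le_iff)
    moreover have "real (card Bmis + m * (3 * card Bmis) + m * s + card BAD) = c + real m * (3 * c) + real m * real s + real (card BAD)"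
      unfolding c_def by simp
    ultimately show ?thesis using far' by linarith
  qed
  have ms2: "real m * real s = \<epsilon> * real n / 2" using ms by simp
  have m0: "real m \<ge> 3" using m3 by simp
  have key: "c * (1 + 3 * real m) \<le> \<epsilon> / 32 * (2 * real L + 2) * (1 + 3 * real m)"
    using mult_right_mono[OF cBm[folded c_def], of "1 + 3 * real m"] mpos by simp
  have poly: "(2 * real L + 2) * (1 + 3 * real m) \<le> 14 * real n"
  proof -
    have "(2 * real L + 2) * (1 + 3 * real m) = 6 * (real L * real m) + 2 * real L + 6 * real m + 2"
      by (simp add: algebra_simps)
    moreover have "real L * 2 \<le> real L * real m" using mult_left_mono[of 2 "real m" "real L"] m0 by simp
    moreover have "3 * real m \<le> real L * real m" using mult_right_mono[of 3 "real L" "real m"] Lge3 mpos by simp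
    ultimately show ?thesis using Lm m0 by linarith
  qed
  have e0: "\<epsilon> / 32 \<ge> 0" using eps by simp
  have "\<epsilon> / 32 * ((2 * real L + 2) * (1 + 3 * real m)) \<le> \<epsilon> / 32 * (14 * real n)"
    using mult_left_mono[OF poly e0] .
  then have fin: "c * (1 + 3 * real m) \<le> \<epsilon> / 32 * (14 * real n)"
    using key unfolding mult.assoc[symmetric] by (rule order_trans[rotated])
  have ex: "c * (1 + 3 * real m) = c + real m * (3 * c)" by (simp add: algebra_simps)
  show False using tot ms2 bad fin ex by linarith
qed


end
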